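(* Let $T$ be a bounded linear operator from the Schreier space $S$ onto a Banach space $Y$, let $C>0$ satisfy $T(C\,B_S)\supseteq B_Y$, and let $(y_i')$ be a normalized weakly null basic sequence in $Y$. If no block basis of 1-averages of $(y_i')$ is equivalent to the unit vector basis of $c_0$, then there exists $\delta>0$ such that whenever $x\in S$ with $\|x\|\le 3C$, $Tx$ is a 1-average of $(y_i')$ and $\|Tx\|>1/3$, we have $\|x\|_0>\delta$.
   Context: Let $c_{00}$ be the space of finitely supported real sequences. For $x=(x_i)\in c_{00}$ set $\|x\|=\max\{\sum_{i=1}^p |x_{k_i}| : p\in\mathbb{N},\ p\le k_1<\cdots<k_p\}$; the Schreier space $S$ is the completion of $(c_{00},\|\cdot\|)$, and $\|x\|_0=\sup_i|x_i|$ denotes the $c_0$-norm. $B_S,B_Y$ are closed unit balls. A 1-average of $(y_n)$ is a vector $\lambda\sum_{n\in F}y_n$ with $\lambda>0$ and $F\subseteq\mathbb{N}$ finite nonempty; a block basis of 1-averages is a sequence $(\lambda_k\sum_{n\in F_k}y_n)_k$ of 1-averages with $\max F_k<\min F_{k+1}$. *)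

theory Defs
  imports "HOL-Analysis.Analysis"
begin

text \<open>Sequences are indexed from 0: coordinate i of a sequence represents the
  paper's coordinate x_{i+1}.  Hence a finite set F of (0-based) indices is
  Schreier-admissible iff card F \<le> Min F + 1 (paper: p \<le> k_1).\<close>

definition schreier_admissible :: "nat set \<Rightarrow> bool" where
  "schreier_admissible F \<longleftrightarrow> finite F \<and> (F \<noteq> {} \<longrightarrow> card F \<le> Min F + 1)"

definition schreier_sums :: "(nat \<Rightarrow> real) \<Rightarrow> real set" where
  "schreier_sums x = {(\<Sum>i\<in>F. \<bar>x i\<bar>) | F. schreier_admissible F}"

definition schreier_norm :: "(nat \<Rightarrow> real) \<Rightarrow> real" where
  "schreier_norm x = Sup (schreier_sums x)"

definition tail_seq :: "nat \<Rightarrow> (nat \<Rightarrow> real) \<Rightarrow> (nat \<Rightarrow> real)" where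
  "tail_seq n x = (\<lambda>i. if i < n then 0 else x i)"

text \<open>The Schreier space S, realised concretely as the closure of c_00 inside
  the sequences of finite Schreier norm: those with finite norm whose tails tend
  to 0 in the Schreier norm.\<close>
definition schreier_space :: "(nat \<Rightarrow> real) set" where
  "schreier_space = {x. bdd_above (schreier_sums x) \<and>
      (\<lambda>n. schreier_norm (tail_seq n x)) \<longlonglongrightarrow> 0}"

definition sup_norm :: "(nat \<Rightarrow> real) \<Rightarrow> real" where
  "sup_norm x = (SUP i. \<bar>x i\<bar>)"

definition schreier_bounded_linear :: "((nat \<Rightarrow> real) \<Rightarrow> 'b::real_normed_vector) \<Rightarrow> bool" where
  "schreier_bounded_linear T \<longleftrightarrow>
     (\<forall>x\<in>schreier_space. \<forall>z\<in>schreier_space. T (\<lambda>i. x i + z i) = T x + T z) \<and>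
     (\<forall>x\<in>schreier_space. \<forall>c. T (\<lambda>i. c * x i) = c *\<^sub>R T x) \<and>
     (\<exists>K. \<forall>x\<in>schreier_space. norm (T x) \<le> K * schreier_norm x)"

definition weakly_null :: "(nat \<Rightarrow> 'b::real_normed_vector) \<Rightarrow> bool" where
  "weakly_null y \<longleftrightarrow> (\<forall>f :: 'b \<Rightarrow> real. bounded_linear f \<longrightarrow> (\<lambda>n. f (y n)) \<longlonglongrightarrow> 0)"

definition basic_sequence :: "(nat \<Rightarrow> 'b::real_normed_vector) \<Rightarrow> bool" where
  "basic_sequence y \<longleftrightarrow>
     (\<forall>z\<in>closure (span (range y)).
        \<exists>!a :: nat \<Rightarrow> real. (\<lambda>n. \<Sum>i<n. a i *\<^sub>R y i) \<longlonglongrightarrow> z)"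

definition one_average :: "(nat \<Rightarrow> 'b::real_normed_vector) \<Rightarrow> 'b \<Rightarrow> bool" where
  "one_average y v \<longleftrightarrow>
     (\<exists>lam F. lam > 0 \<and> finite F \<and> F \<noteq> {} \<and> v = lam *\<^sub>R (\<Sum>n\<in>F. y n))"

definition block_basis_of_1_averages ::
    "(nat \<Rightarrow> 'b::real_normed_vector) \<Rightarrow> (nat \<Rightarrow> 'b) \<Rightarrow> bool" where
  "block_basis_of_1_averages y u \<longleftrightarrow>
     (\<exists>lam F. (\<forall>k. lam k > (0::real) \<and> finite (F k) \<and> F k \<noteq> {} \<and>
                   u k = lam k *\<^sub>R (\<Sum>n\<in>F k. y n)) \<and>
              (\<forall>k. Max (F k) < Min (F (Suc k))))"

definition equiv_c0_basis :: "(nat \<Rightarrow> 'b::real_normed_vector) \<Rightarrow> bool" where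
  "equiv_c0_basis u \<longleftrightarrow>
     (\<exists>A B. A > 0 \<and> B > 0 \<and>
        (\<forall>n (a :: nat \<Rightarrow> real).
           A * (MAX k\<in>{..n}. \<bar>a k\<bar>) \<le> norm (\<Sum>k\<le>n. a k *\<^sub>R u k) \<and>
           norm (\<Sum>k\<le>n. a k *\<^sub>R u k) \<le> B * (MAX k\<in>{..n}. \<bar>a k\<bar>)))"

end

theory Submission
  imports Defs
begin


lemma adm_empty[simp]: "schreier_admissible {}"
  by (simp add: schreier_admissible_def)

lemma adm_single: "schreier_admissible {i}"
  by (simp add: schreier_admissible_def)

lemma adm_subset:
  assumes "schreier_admissible F" "G \<subseteq> F"
  shows "schreier_admissible G"
proof (cases "G = {}")
  case True then show ?thesis by simp
next
  case False
  have fF: "finite F" using assms(1) by (simp add: schreier_admissible_def)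
  then have fG: "finite G" using assms(2) finite_subset by blast
  have "F \<noteq> {}" using False assms(2) by blast
  then have c: "card F \<le> Min F + 1" using assms(1) by (simp add: schreier_admissible_def)
  have "card G \<le> card F" using card_mono[OF fF assms(2)] .
  moreover have "Min F \<le> Min G" using Min_antimono[OF assms(2) False fF] .
  ultimately show ?thesis using c fG by (simp add: schreier_admissible_def)
qed

lemma adm_card: "schreier_admissible F \<Longrightarrow> F \<noteq> {} \<Longrightarrow> card F \<le> Min F + 1"
  by (simp add: schreier_admissible_def)

lemma adm_finite: "schreier_admissible F \<Longrightarrow> finite F"
  by (simp add: schreier_admissible_def)

lemma sums_nonempty: "schreier_sums x \<noteq> {}"
  unfolding schreier_sums_def using adm_empty by blast

lemma sum_le_norm:
  assumes "bdd_above (schreier_sums x)" "schreier_admissible F"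
  shows "(\<Sum>i\<in>F. \<bar>x i\<bar>) \<le> schreier_norm x"
  unfolding schreier_norm_def
  by (rule cSup_upper) (use assms in \<open>auto simp: schreier_sums_def\<close>)

lemma norm_le:
  assumes "\<And>F. schreier_admissible F \<Longrightarrow> (\<Sum>i\<in>F. \<bar>x i\<bar>) \<le> B"
  shows "schreier_norm x \<le> B"
  unfolding schreier_norm_def
  by (rule cSup_least[OF sums_nonempty]) (use assms in \<open>auto simp: schreier_sums_def\<close>)

lemma bdd_from:
  assumes "\<And>F. schreier_admissible F \<Longrightarrow> (\<Sum>i\<in>F. \<bar>x i\<bar>) \<le> B"
  shows "bdd_above (schreier_sums x)"
  using assms unfolding schreier_sums_def bdd_above_def by auto

lemma norm_nonneg:
  assumes "bdd_above (schreier_sums x)"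
  shows "0 \<le> schreier_norm x"
  using sum_le_norm[OF assms adm_empty] by simp

lemma S_bdd: "x \<in> schreier_space \<Longrightarrow> bdd_above (schreier_sums x)"
  by (simp add: schreier_space_def)

lemma S_tail: "x \<in> schreier_space \<Longrightarrow> (\<lambda>n. schreier_norm (tail_seq n x)) \<longlonglongrightarrow> 0"
  by (simp add: schreier_space_def)

lemma coord_le_norm:
  assumes "bdd_above (schreier_sums x)"
  shows "\<bar>x i\<bar> \<le> schreier_norm x"
  using sum_le_norm[OF assms adm_single[of i]] by simp

lemma tail_bdd:
  assumes "bdd_above (schreier_sums x)"
  shows "bdd_above (schreier_sums (tail_seq n x))"
proof (rule bdd_from)
  fix F assume F: "schreier_admissible F"
  have "(\<Sum>i\<in>F. \<bar>tail_seq n x i\<bar>) \<le> (\<Sum>i\<in>F. \<bar>x i\<bar>)"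
    by (rule sum_mono) (simp add: tail_seq_def)
  also have "\<dots> \<le> schreier_norm x" using sum_le_norm[OF assms F] .
  finally show "(\<Sum>i\<in>F. \<bar>tail_seq n x i\<bar>) \<le> schreier_norm x" .
qed

lemma sum_tail_le:
  assumes "bdd_above (schreier_sums x)" "schreier_admissible F" "\<forall>i\<in>F. n \<le> i"
  shows "(\<Sum>i\<in>F. \<bar>x i\<bar>) \<le> schreier_norm (tail_seq n x)"
proof -
  have "(\<Sum>i\<in>F. \<bar>x i\<bar>) = (\<Sum>i\<in>F. \<bar>tail_seq n x i\<bar>)"
    by (rule sum.cong) (use assms(3) in \<open>auto simp: tail_seq_def\<close>)
  also have "\<dots> \<le> schreier_norm (tail_seq n x)"
    using sum_le_norm[OF tail_bdd[OF assms(1)] assms(2)] .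
  finally show ?thesis .
qed

lemma S_zero: "(\<lambda>i. 0) \<in> schreier_space"
proof -
  have b: "bdd_above (schreier_sums (\<lambda>i::nat. 0::real))" by (rule bdd_from[where B=0]) simp
  have "schreier_norm (tail_seq n (\<lambda>i. 0)) = 0" for n
  proof -
    have "tail_seq n (\<lambda>i. 0) = (\<lambda>i::nat. 0::real)" by (simp add: tail_seq_def)
    moreover have "schreier_norm (\<lambda>i::nat. 0::real) = 0"
      using norm_le[of "\<lambda>i. 0" 0] norm_nonneg[OF b] by simp
    ultimately show ?thesis by simp
  qed
  then show ?thesis using b by (simp add: schreier_space_def)
qed

lemma norm_add_le:
  assumes "bdd_above (schreier_sums x)" "bdd_above (schreier_sums z)"
  shows "bdd_above (schreier_sums (\<lambda>i. x i + z i))"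
    and "schreier_norm (\<lambda>i. x i + z i) \<le> schreier_norm x + schreier_norm z"
proof -
  have *: "(\<Sum>i\<in>F. \<bar>x i + z i\<bar>) \<le> schreier_norm x + schreier_norm z" if F: "schreier_admissible F" for F
  proof -
    have "(\<Sum>i\<in>F. \<bar>x i + z i\<bar>) \<le> (\<Sum>i\<in>F. \<bar>x i\<bar> + \<bar>z i\<bar>)"
      by (rule sum_mono) (rule abs_triangle_ineq)
    also have "\<dots> = (\<Sum>i\<in>F. \<bar>x i\<bar>) + (\<Sum>i\<in>F. \<bar>z i\<bar>)" by (simp add: sum.distrib)
    also have "\<dots> \<le> schreier_norm x + schreier_norm z"
      using sum_le_norm[OF assms(1) F] sum_le_norm[OF assms(2) F] by simp
    finally show ?thesis .
  qed
  show "bdd_above (schreier_sums (\<lambda>i. x i + z i))" by (rule bdd_from, rule *)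
  show "schreier_norm (\<lambda>i. x i + z i) \<le> schreier_norm x + schreier_norm z" by (rule norm_le, rule *)
qed

lemma norm_scale_le:
  assumes "bdd_above (schreier_sums x)"
  shows "bdd_above (schreier_sums (\<lambda>i. c * x i))"
    and "schreier_norm (\<lambda>i. c * x i) \<le> \<bar>c\<bar> * schreier_norm x"
proof -
  have *: "(\<Sum>i\<in>F. \<bar>c * x i\<bar>) \<le> \<bar>c\<bar> * schreier_norm x" if F: "schreier_admissible F" for F
  proof -
    have "(\<Sum>i\<in>F. \<bar>c * x i\<bar>) = \<bar>c\<bar> * (\<Sum>i\<in>F. \<bar>x i\<bar>)" by (simp add: abs_mult sum_distrib_left)
    also have "\<dots> \<le> \<bar>c\<bar> * schreier_norm x"
      using sum_le_norm[OF assms F] by (simp add: mult_left_mono)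
    finally show ?thesis .
  qed
  show "bdd_above (schreier_sums (\<lambda>i. c * x i))" by (rule bdd_from, rule *)
  show "schreier_norm (\<lambda>i. c * x i) \<le> \<bar>c\<bar> * schreier_norm x" by (rule norm_le, rule *)
qed

lemma S_add:
  assumes "x \<in> schreier_space" "z \<in> schreier_space"
  shows "(\<lambda>i. x i + z i) \<in> schreier_space"
proof -
  have bx: "bdd_above (schreier_sums x)" and bz: "bdd_above (schreier_sums z)"
    using assms S_bdd by auto
  have tx: "(\<lambda>n. schreier_norm (tail_seq n x)) \<longlonglongrightarrow> 0" and tz: "(\<lambda>n. schreier_norm (tail_seq n z)) \<longlonglongrightarrow> 0"
    using assms S_tail by auto
  have eq: "tail_seq n (\<lambda>i. x i + z i) = (\<lambda>i. tail_seq n x i + tail_seq n z i)" for n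
    by (auto simp: tail_seq_def)
  have up: "schreier_norm (tail_seq n (\<lambda>i. x i + z i)) \<le> schreier_norm (tail_seq n x) + schreier_norm (tail_seq n z)" for n
    unfolding eq by (rule norm_add_le(2)[OF tail_bdd[OF bx] tail_bdd[OF bz]])
  have lo: "0 \<le> schreier_norm (tail_seq n (\<lambda>i. x i + z i))" for n
    by (rule norm_nonneg, rule tail_bdd, rule norm_add_le(1)[OF bx bz])
  have L: "(\<lambda>n. schreier_norm (tail_seq n x) + schreier_norm (tail_seq n z)) \<longlonglongrightarrow> 0"
    using tendsto_add[OF tx tz] by simp
  have "(\<lambda>n. schreier_norm (tail_seq n (\<lambda>i. x i + z i))) \<longlonglongrightarrow> 0"
    by (rule tendsto_sandwich[OF _ _ tendsto_const L]) (use up lo in \<open>auto intro: always_eventually\<close>)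
  then show ?thesis using norm_add_le(1)[OF bx bz] by (simp add: schreier_space_def)
qed

lemma S_scale:
  assumes "x \<in> schreier_space"
  shows "(\<lambda>i. c * x i) \<in> schreier_space"
proof -
  have bx: "bdd_above (schreier_sums x)" using assms S_bdd by auto
  have tx: "(\<lambda>n. schreier_norm (tail_seq n x)) \<longlonglongrightarrow> 0" using assms S_tail by auto
  have eq: "tail_seq n (\<lambda>i. c * x i) = (\<lambda>i. c * tail_seq n x i)" for n
    by (auto simp: tail_seq_def)
  have up: "schreier_norm (tail_seq n (\<lambda>i. c * x i)) \<le> \<bar>c\<bar> * schreier_norm (tail_seq n x)" for n
    unfolding eq by (rule norm_scale_le(2)[OF tail_bdd[OF bx]])
  have lo: "0 \<le> schreier_norm (tail_seq n (\<lambda>i. c * x i))" for n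
    by (rule norm_nonneg, rule tail_bdd, rule norm_scale_le(1)[OF bx])
  have L: "(\<lambda>n. \<bar>c\<bar> * schreier_norm (tail_seq n x)) \<longlonglongrightarrow> 0"
    using tendsto_mult_left[OF tx, of "\<bar>c\<bar>"] by simp
  have "(\<lambda>n. schreier_norm (tail_seq n (\<lambda>i. c * x i))) \<longlonglongrightarrow> 0"
    by (rule tendsto_sandwich[OF _ _ tendsto_const L]) (use up lo in \<open>auto intro: always_eventually\<close>)
  then show ?thesis using norm_scale_le(1)[OF bx] by (simp add: schreier_space_def)
qed

lemma S_sum:
  assumes "finite K" "\<And>k. k \<in> K \<Longrightarrow> x k \<in> schreier_space"
  shows "(\<lambda>i. \<Sum>k\<in>K. a k * x k i) \<in> schreier_space"
  using assms
proof (induction K rule: finite_induct)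
  case empty then show ?case using S_zero by simp
next
  case (insert k K)
  have "(\<lambda>i. (\<lambda>i. a k * x k i) i + (\<lambda>i. \<Sum>k\<in>K. a k * x k i) i) \<in> schreier_space"
    by (rule S_add) (use insert S_scale in auto)
  then show ?case using insert by simp
qed

lemma T_add:
  assumes "schreier_bounded_linear T" "x \<in> schreier_space" "z \<in> schreier_space"
  shows "T (\<lambda>i. x i + z i) = T x + T z"
  using assms unfolding schreier_bounded_linear_def by blast

lemma T_scale:
  assumes "schreier_bounded_linear T" "x \<in> schreier_space"
  shows "T (\<lambda>i. c * x i) = c *\<^sub>R T x"
  using assms unfolding schreier_bounded_linear_def by blast

lemma T_sum:
  assumes T_bl: "schreier_bounded_linear T"
    and "finite K" "\<And>k. k \<in> K \<Longrightarrow> x k \<in> schreier_space"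
  shows "T (\<lambda>i. \<Sum>k\<in>K. a k * x k i) = (\<Sum>k\<in>K. a k *\<^sub>R T (x k))"
  using assms(2,3)
proof (induction K rule: finite_induct)
  case empty
  have "\<forall>x\<in>schreier_space. \<forall>c. T (\<lambda>i. c * x i) = c *\<^sub>R T x"
    using T_bl unfolding schreier_bounded_linear_def by blast
  from bspec[OF this S_zero] have "\<forall>c. T (\<lambda>i. c * 0) = c *\<^sub>R T (\<lambda>i. 0)" by simp
  then have "T (\<lambda>i. 0) = 0" by (metis mult_zero_right scaleR_zero_left)
  then show ?case by simp
next
  case (insert k K)
  have m1: "(\<lambda>i. a k * x k i) \<in> schreier_space" using insert S_scale by auto
  have m2: "(\<lambda>i. \<Sum>k\<in>K. a k * x k i) \<in> schreier_space" by (rule S_sum) (use insert.prems insert.hyps in auto)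
  have "T (\<lambda>i. (\<lambda>i. a k * x k i) i + (\<lambda>i. \<Sum>k\<in>K. a k * x k i) i)
        = T (\<lambda>i. a k * x k i) + T (\<lambda>i. \<Sum>k\<in>K. a k * x k i)"
    using T_add[OF T_bl m1 m2] by simp
  also have "T (\<lambda>i. a k * x k i) = a k *\<^sub>R T (x k)"
    using T_bl insert unfolding schreier_bounded_linear_def by blast
  finally show ?case using insert by simp
qed

lemma T_bound:
  assumes "schreier_bounded_linear T"
  obtains K where "K \<ge> 0" "\<And>x. x \<in> schreier_space \<Longrightarrow> norm (T x) \<le> K * schreier_norm x"
proof -
  obtain K where K: "\<forall>x\<in>schreier_space. norm (T x) \<le> K * schreier_norm x"
    using assms unfolding schreier_bounded_linear_def by blast
  show ?thesis
  proof (rule that[of "max K 0"])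
    fix x assume x: "x \<in> schreier_space"
    have "0 \<le> schreier_norm x" using norm_nonneg[OF S_bdd[OF x]] .
    then have "K * schreier_norm x \<le> max K 0 * schreier_norm x" by (simp add: mult_right_mono)
    then show "norm (T x) \<le> max K 0 * schreier_norm x" using K x by force
  qed simp
qed

lemma sup_norm_coord:
  assumes "x \<in> schreier_space"
  shows "\<bar>x i\<bar> \<le> sup_norm x"
  unfolding sup_norm_def
  by (rule cSUP_upper) (use coord_le_norm[OF S_bdd[OF assms]] in \<open>auto simp: bdd_above_def\<close>)



definition PS :: "(nat \<Rightarrow> 'b::real_normed_vector) \<Rightarrow> (nat \<Rightarrow> real) \<Rightarrow> nat \<Rightarrow> 'b" where
  "PS y a n = (\<Sum>i<n. a i *\<^sub>R y i)"

definition Zs :: "(nat \<Rightarrow> 'b::real_normed_vector) \<Rightarrow> 'b set" where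
  "Zs y = closure (span (range y))"

definition coef :: "(nat \<Rightarrow> 'b::real_normed_vector) \<Rightarrow> 'b \<Rightarrow> nat \<Rightarrow> real" where
  "coef y z = (THE a. PS y a \<longlonglongrightarrow> z)"

lemma PS_eta: "PS y a = (\<lambda>n. \<Sum>i<n. a i *\<^sub>R y i)"
  by (rule ext) (simp add: PS_def)

lemma PS_in_span: "PS y a n \<in> span (range y)"
  unfolding PS_def by (intro span_sum span_scale span_base) auto

lemma lim_in_Z: "PS y a \<longlonglongrightarrow> z \<Longrightarrow> z \<in> Zs y"
  unfolding Zs_def closure_sequential using PS_in_span by blast

lemma coef_unique:
  assumes "basic_sequence y" "PS y a \<longlonglongrightarrow> z"
  shows "coef y z = a"
proof -
  have "z \<in> Zs y" using lim_in_Z[OF assms(2)] .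
  then have "\<exists>!a. PS y a \<longlonglongrightarrow> z" using assms(1) unfolding basic_sequence_def Zs_def PS_eta by blast
  then show ?thesis unfolding coef_def using assms(2) by (blast intro: the1_equality)
qed

lemma coef_conv:
  assumes "basic_sequence y" "z \<in> Zs y"
  shows "PS y (coef y z) \<longlonglongrightarrow> z"
proof -
  have "\<exists>!a. PS y a \<longlonglongrightarrow> z" using assms unfolding basic_sequence_def Zs_def PS_eta by blast
  then show ?thesis unfolding coef_def by (rule theI')
qed

lemma PS_add: "PS y (\<lambda>i. a i + b i) n = PS y a n + PS y b n"
  by (simp add: PS_def scaleR_add_left sum.distrib)

lemma PS_scale: "PS y (\<lambda>i. t * a i) n = t *\<^sub>R PS y a n"
  by (simp add: PS_def scaleR_sum_right)

lemma PS_diff: "PS y (\<lambda>i. a i - b i) n = PS y a n - PS y b n"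
  by (simp add: PS_def scaleR_diff_left sum_subtractf)

lemma PS_sum: "PS y (\<lambda>i. \<Sum>j\<in>J. c j i) n = (\<Sum>j\<in>J. PS y (c j) n)"
  unfolding PS_def scaleR_sum_left by (rule sum.swap)

lemma PS_step: "a i *\<^sub>R y i = PS y a (Suc i) - PS y a i"
  by (simp add: PS_def)

lemma coord_bound:
  assumes "norm (y i) = 1" "\<And>n. norm (PS y a n) \<le> B"
  shows "\<bar>a i\<bar> \<le> 2 * B"
proof -
  have "\<bar>a i\<bar> = norm (a i *\<^sub>R y i)" using assms(1) by simp
  also have "\<dots> = norm (PS y a (Suc i) - PS y a i)" by (simp only: PS_step)
  also have "\<dots> \<le> norm (PS y a (Suc i)) + norm (PS y a i)" by (rule norm_triangle_ineq4)
  also have "\<dots> \<le> 2 * B" using assms(2)[of "Suc i"] assms(2)[of i] by simp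
  finally show ?thesis .
qed

lemma Z_add:
  assumes "basic_sequence y" "z \<in> Zs y" "w \<in> Zs y"
  shows "z + w \<in> Zs y" and "coef y (z + w) = (\<lambda>i. coef y z i + coef y w i)"
proof -
  have "PS y (\<lambda>i. coef y z i + coef y w i) \<longlonglongrightarrow> z + w"
    unfolding PS_add[abs_def] by (intro tendsto_add coef_conv assms)
  then show "z + w \<in> Zs y" "coef y (z + w) = (\<lambda>i. coef y z i + coef y w i)"
    using lim_in_Z coef_unique[OF assms(1)] by blast+
qed

lemma Z_scale:
  assumes "basic_sequence y" "z \<in> Zs y"
  shows "t *\<^sub>R z \<in> Zs y" and "coef y (t *\<^sub>R z) = (\<lambda>i. t * coef y z i)"
proof -
  have "PS y (\<lambda>i. t * coef y z i) \<longlonglongrightarrow> t *\<^sub>R z"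
    unfolding PS_scale[abs_def] by (intro tendsto_scaleR tendsto_const coef_conv assms)
  then show "t *\<^sub>R z \<in> Zs y" "coef y (t *\<^sub>R z) = (\<lambda>i. t * coef y z i)"
    using lim_in_Z coef_unique[OF assms(1)] by blast+
qed

lemma Z_diff:
  assumes "basic_sequence y" "z \<in> Zs y" "w \<in> Zs y"
  shows "z - w \<in> Zs y" and "coef y (z - w) = (\<lambda>i. coef y z i - coef y w i)"
proof -
  have "PS y (\<lambda>i. coef y z i - coef y w i) \<longlonglongrightarrow> z - w"
    unfolding PS_diff[abs_def] by (intro tendsto_diff coef_conv assms)
  then show "z - w \<in> Zs y" "coef y (z - w) = (\<lambda>i. coef y z i - coef y w i)"
    using lim_in_Z coef_unique[OF assms(1)] by blast+
qed

lemma Z_closed: "closed (Zs y)"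
  unfolding Zs_def by simp

lemma Z_zero: "0 \<in> Zs y"
  unfolding Zs_def using closure_subset span_zero by blast



lemma baire_step:
  fixes y :: "nat \<Rightarrow> 'b::banach"
  assumes yb: "basic_sequence y"
  shows "\<exists>K r. K \<ge> 0 \<and> r > 0 \<and> (\<forall>z\<in>Zs y. norm z < r \<longrightarrow>
           (\<forall>\<epsilon>>0. \<exists>w\<in>Zs y. (\<forall>n. norm (PS y (coef y w) n) \<le> K) \<and> norm (z - w) < \<epsilon>))"
proof -
  define G where "G K = {z \<in> Zs y. \<forall>n. norm (PS y (coef y z) n) \<le> real K}" for K :: nat
  define X where "X = top_of_set (Zs y)"
  have cms: "completely_metrizable_space X"
    unfolding X_def
    using completely_metrizable_space_closedin[OF completely_metrizable_space_euclidean, of "Zs y"]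
      Z_closed closed_closedin by fastforce
  define \<G> where "\<G> = range (\<lambda>K. Zs y \<inter> closure (G K))"
  have cnt: "countable \<G>" unfolding \<G>_def by simp
  have cov: "\<Union>\<G> = Zs y"
  proof
    show "\<Union>\<G> \<subseteq> Zs y" unfolding \<G>_def by auto
    show "Zs y \<subseteq> \<Union>\<G>"
    proof
      fix z assume z: "z \<in> Zs y"
      have "Bseq (PS y (coef y z))" using coef_conv[OF yb z] by (rule convergent_imp_Bseq[OF convergentI])
      then obtain B where B: "\<And>n. norm (PS y (coef y z) n) \<le> B" unfolding Bseq_def by auto
      obtain K :: nat where "B \<le> real K" using real_arch_simple by blast
      then have "z \<in> G K" using z B unfolding G_def by (auto intro: order_trans)
      then have "z \<in> Zs y \<inter> closure (G K)" using z closure_subset by blast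
      then show "z \<in> \<Union>\<G>" unfolding \<G>_def by blast
    qed
  qed
  have "X interior_of \<Union>\<G> \<noteq> {}"
    unfolding cov X_def using Z_zero
    by (metis empty_iff interior_of_topspace topspace_euclidean_subtopology)
  moreover have "closedin X T" if "T \<in> \<G>" for T
    using that closedin_closed_Int unfolding \<G>_def X_def by blast
  ultimately obtain T where T: "T \<in> \<G>" "X interior_of T \<noteq> {}"
    using Baire_category_alt[OF disjI1[OF cms] cnt] by blast
  from T(1) obtain K where TK: "T = Zs y \<inter> closure (G K)" unfolding \<G>_def by blast
  obtain U where U: "openin X U" "U \<subseteq> T" "U \<noteq> {}"
    using T(2) unfolding interior_of_eq_empty by blast
  then obtain Op where O: "open Op" "U = Zs y \<inter> Op" unfolding X_def openin_open by blast
  obtain z0 where z0: "z0 \<in> U" using U(3) by blast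
  then obtain r where r: "r > 0" "ball z0 r \<subseteq> Op" using O open_contains_ball by blast
  have z0Z: "z0 \<in> Zs y" using z0 O by blast
  have incl: "v \<in> closure (G K)" if "v \<in> Zs y" "dist z0 v < r" for v
  proof -
    have "v \<in> Op" using r(2) that(2) by (auto simp: mem_ball)
    then have "v \<in> U" using O(2) that(1) by blast
    then show ?thesis using U(2) TK by blast
  qed
  show ?thesis
  proof (intro exI conjI ballI allI impI)
    show "0 \<le> real K" by simp
    show "r > 0" by fact
    fix z \<epsilon>
    assume z: "z \<in> Zs y" "norm z < r" and e: "(\<epsilon>::real) > 0"
    have p0: "z0 + z \<in> Zs y" using Z_add(1)[OF yb z0Z z(1)] .
    have q0: "z0 - z \<in> Zs y" using Z_diff(1)[OF yb z0Z z(1)] .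
    have "z0 + z \<in> closure (G K)" using incl[OF p0] z(2) by (simp add: dist_norm)
    then obtain p where p: "p \<in> G K" "dist p (z0 + z) < \<epsilon>" using e closure_approachable by blast
    have "z0 - z \<in> closure (G K)" using incl[OF q0] z(2) by (simp add: dist_norm)
    then obtain q where q: "q \<in> G K" "dist q (z0 - z) < \<epsilon>" using e closure_approachable by blast
    have pZ: "p \<in> Zs y" and qZ: "q \<in> Zs y" using p q unfolding G_def by auto
    define w where "w = (1/2) *\<^sub>R (p - q)"
    have pq: "p - q \<in> Zs y" using Z_diff(1)[OF yb pZ qZ] .
    have wZ: "w \<in> Zs y" unfolding w_def using Z_scale(1)[OF yb pq] .
    have cw: "coef y w = (\<lambda>i. (1/2) * (coef y p i - coef y q i))"
      unfolding w_def Z_scale(2)[OF yb pq] Z_diff(2)[OF yb pZ qZ] ..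
    have "norm (PS y (coef y w) n) \<le> real K" for n
    proof -
      have "PS y (coef y w) n = (1/2) *\<^sub>R (PS y (coef y p) n - PS y (coef y q) n)"
        unfolding cw PS_scale PS_diff ..
      also have "norm \<dots> \<le> (1/2) * (norm (PS y (coef y p) n) + norm (PS y (coef y q) n))"
        by (simp add: norm_triangle_ineq4)
      also have "\<dots> \<le> (1/2) * (real K + real K)"
        using p(1) q(1) unfolding G_def by (intro mult_left_mono add_mono) auto
      finally show ?thesis by simp
    qed
    moreover have "norm (z - w) < \<epsilon>"
    proof -
      have "z - w = (1/2) *\<^sub>R ((z0 + z - p) - (z0 - z - q))" unfolding w_def
        by (simp add: algebra_simps flip: scaleR_add_left)
      then have "norm (z - w) = (1/2) * norm ((z0 + z - p) - (z0 - z - q))"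
        by (simp only: norm_scaleR)
      also have "\<dots> \<le> (1/2) * (norm (z0 + z - p) + norm (z0 - z - q))"
        by (rule mult_left_mono[OF norm_triangle_ineq4]) simp
      also have "\<dots> < (1/2) * (\<epsilon> + \<epsilon>)"
        using p(2) q(2) by (simp add: dist_norm norm_minus_commute)
      finally show ?thesis by simp
    qed
    ultimately show "\<exists>w\<in>Zs y. (\<forall>n. norm (PS y (coef y w) n) \<le> real K) \<and> norm (z - w) < \<epsilon>"
      using wZ by blast
  qed
qed



lemma geom_sum: "(\<Sum>j<n. (1/2::real)^j) = 2 - 2 * (1/2)^n"
  by (induction n) auto

lemma scaled_step:
  fixes y :: "nat \<Rightarrow> 'b::banach"
  assumes yb: "basic_sequence y" and K: "K \<ge> 0" "r > 0"
    and H: "\<forall>z\<in>Zs y. norm z < r \<longrightarrow>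
           (\<forall>\<epsilon>>0. \<exists>w\<in>Zs y. (\<forall>n. norm (PS y (coef y w) n) \<le> K) \<and> norm (z - w) < \<epsilon>)"
    and z: "z \<in> Zs y" "norm z < r * (1/2)^j"
  shows "\<exists>w\<in>Zs y. (\<forall>n. norm (PS y (coef y w) n) \<le> K * (1/2)^j) \<and> norm (z - w) < r * (1/2)^(Suc j)"
proof -
  define t :: real where "t = 2^j"
  have t: "t > 0" "t * (1/2)^j = 1" unfolding t_def by (auto simp: power_one_over field_simps)
  have z'Z: "t *\<^sub>R z \<in> Zs y" using Z_scale(1)[OF yb z(1)] .
  have "norm (t *\<^sub>R z) < r" using z(2) t
    by (simp add: mult.commute) (metis (no_types, lifting) mult.commute mult_strict_left_mono mult.assoc mult_1)
  then obtain w' where w': "w' \<in> Zs y" "\<And>n. norm (PS y (coef y w') n) \<le> K" "norm (t *\<^sub>R z - w') < r / 2"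
    using H z'Z K(2) by (meson half_gt_zero)
  define w where "w = (1/2)^j *\<^sub>R w'"
  have wZ: "w \<in> Zs y" unfolding w_def using Z_scale(1)[OF yb w'(1)] .
  have cw: "coef y w = (\<lambda>i. (1/2)^j * coef y w' i)" unfolding w_def using Z_scale(2)[OF yb w'(1)] .
  have "norm (PS y (coef y w) n) \<le> K * (1/2)^j" for n
    unfolding cw PS_scale using w'(2)[of n] by (simp add: mult.commute mult_right_mono)
  moreover have "norm (z - w) < r * (1/2)^(Suc j)"
  proof -
    have "z - w = (1/2)^j *\<^sub>R (t *\<^sub>R z - w')" unfolding w_def using t(2)
      by (simp add: algebra_simps)
    then have "norm (z - w) = (1/2)^j * norm (t *\<^sub>R z - w')" by simp
    also have "\<dots> < (1/2)^j * (r/2)" using w'(3) by simp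
    finally show ?thesis by (simp add: field_simps)
  qed
  ultimately show ?thesis using wZ by blast
qed



lemma sum_split_ivl: "J \<le> J' \<Longrightarrow> (\<Sum>j<J'. g j) = (\<Sum>j<J. g j) + (\<Sum>j\<in>{J..<J'}. g j)"
  for g :: "nat \<Rightarrow> 'a::comm_monoid_add"
  by (metis atLeast0LessThan le0 sum.atLeastLessThan_concat)

lemma iterate_bound:
  fixes y :: "nat \<Rightarrow> 'b::banach"
  assumes yb: "basic_sequence y" and yn: "\<forall>i. norm (y i) = 1" and K: "K \<ge> 0" and r: "r > 0"
    and H: "\<forall>z\<in>Zs y. norm z < r \<longrightarrow>
           (\<forall>\<epsilon>>0. \<exists>w\<in>Zs y. (\<forall>n. norm (PS y (coef y w) n) \<le> K) \<and> norm (z - w) < \<epsilon>)"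
    and z: "z \<in> Zs y" "norm z < r"
  shows "norm (PS y (coef y z) n) \<le> 2 * K"
proof -
  define P where "P j v \<longleftrightarrow> v \<in> Zs y \<and> norm v < r * (1/2)^j" for j v
  define Q where "Q j v w \<longleftrightarrow> w \<in> Zs y \<and> (\<forall>n. norm (PS y (coef y w) n) \<le> K * (1/2)^j) \<and> norm (v - w) < r * (1/2)^(Suc j)" for j v w
  have ex: "P j v \<Longrightarrow> \<exists>w. Q j v w" for j v
    using scaled_step[OF yb K r H] unfolding P_def Q_def by blast
  define f where "f j v = (SOME w. Q j v w)" for j v
  have fQ: "P j v \<Longrightarrow> Q j v (f j v)" for j v
    unfolding f_def using ex someI_ex by metis
  define R where "R = rec_nat z (\<lambda>j v. v - f j v)"
  have R0: "R 0 = z" and RS: "R (Suc j) = R j - f j (R j)" for j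
    unfolding R_def by simp_all
  have RP: "P j (R j)" for j
  proof (induction j)
    case 0 then show ?case using z unfolding P_def R0 by simp
  next
    case (Suc j)
    have q: "Q j (R j) (f j (R j))" using fQ[OF Suc] .
    show ?case unfolding P_def RS
      using Z_diff(1)[OF yb _ , of "R j" "f j (R j)"] Suc q unfolding P_def Q_def by auto
  qed
  define w where "w j = f j (R j)" for j
  have wQ: "Q j (R j) (w j)" for j unfolding w_def using fQ[OF RP] .
  have wZ: "w j \<in> Zs y" for j using wQ[of j] unfolding Q_def by blast
  have wB: "norm (PS y (coef y (w j)) n) \<le> K * (1/2)^j" for j n using wQ[of j] unfolding Q_def by blast
  have decomp: "z = (\<Sum>j<J. w j) + R J" for J
    by (induction J) (auto simp: R0 RS w_def)
  define c where "c j = coef y (w j)" for j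
  have cb: "\<bar>c j i\<bar> \<le> 2 * K * (1/2)^j" for j i
    using coord_bound[of y i "c j" "K * (1/2)^j"] yn wB unfolding c_def by simp
  have summ: "summable (\<lambda>j. c j i)" for i
  proof (rule summable_comparison_test)
    show "\<exists>N. \<forall>j\<ge>N. norm (c j i) \<le> 2 * K * (1/2)^j" using cb by auto
    show "summable (\<lambda>j. 2 * K * (1/2::real)^j)"
      by (intro summable_mult summable_geometric) simp
  qed
  define a where "a i = (\<Sum>j. c j i)" for i
  have alim: "(\<lambda>J. \<Sum>j<J. c j i) \<longlonglongrightarrow> a i" for i
    unfolding a_def using summ by (rule summable_LIMSEQ)
  define s where "s J n = PS y (\<lambda>i. \<Sum>j<J. c j i) n" for J n
  have s_eq: "s J n = (\<Sum>j<J. PS y (c j) n)" for J n unfolding s_def PS_sum ..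
  have slim: "(\<lambda>J. s J n) \<longlonglongrightarrow> PS y a n" for n
    unfolding s_def PS_def by (intro tendsto_sum tendsto_scaleR alim tendsto_const)
  have sB: "norm (s J n) \<le> 2 * K" for J n
  proof -
    have "norm (s J n) \<le> (\<Sum>j<J. norm (PS y (c j) n))" unfolding s_eq by (rule norm_sum)
    also have "\<dots> \<le> (\<Sum>j<J. K * (1/2)^j)" by (rule sum_mono) (use wB c_def in auto)
    also have "\<dots> = K * (2 - 2 * (1/2)^J)" by (simp add: sum_distrib_left[symmetric] geom_sum)
    also have "\<dots> \<le> 2 * K"
    proof -
      have "0 \<le> K * (1/2::real)^J" using K by simp
      then show ?thesis by (simp add: algebra_simps)
    qed
    finally show ?thesis .
  qed
  have sdiff: "norm (s J' n - s J n) \<le> 2 * K * (1/2)^J" if "J \<le> J'" for J J' n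
  proof -
    have "s J' n - s J n = (\<Sum>j\<in>{J..<J'}. PS y (c j) n)"
      unfolding s_eq using sum_split_ivl[OF that, of "\<lambda>j. PS y (c j) n"] by simp
    then have "norm (s J' n - s J n) \<le> (\<Sum>j\<in>{J..<J'}. norm (PS y (c j) n))"
      by (simp add: norm_sum)
    also have "\<dots> \<le> (\<Sum>j\<in>{J..<J'}. K * (1/2)^j)" by (rule sum_mono) (use wB c_def in auto)
    also have "\<dots> = (\<Sum>j<J'. K * (1/2)^j) - (\<Sum>j<J. K * (1/2)^j)"
      using sum_split_ivl[OF that, of "\<lambda>j. K * (1/2)^j"] by simp
    also have "\<dots> = K * (2 * (1/2)^J - 2 * (1/2)^J')"
      by (simp add: sum_distrib_left[symmetric] geom_sum algebra_simps)
    also have "\<dots> \<le> 2 * K * (1/2)^J"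
    proof -
      have "0 \<le> K * (1/2::real)^J'" using K by simp
      then show ?thesis by (simp add: algebra_simps)
    qed
    finally show ?thesis .
  qed
  have adiff: "norm (PS y a n - s J n) \<le> 2 * K * (1/2)^J" for J n
  proof -
    have "(\<lambda>J'. norm (s J' n - s J n)) \<longlonglongrightarrow> norm (PS y a n - s J n)"
      by (intro tendsto_norm tendsto_diff slim tendsto_const)
    then show ?thesis
      by (rule LIMSEQ_le_const2) (use sdiff in auto)
  qed
  have aB: "norm (PS y a n) \<le> 2 * K" for n
  proof -
    have "(\<lambda>J. norm (s J n)) \<longlonglongrightarrow> norm (PS y a n)" by (intro tendsto_norm slim)
    then show ?thesis by (rule LIMSEQ_le_const2) (use sB in auto)
  qed
  have alimz: "PS y a \<longlonglongrightarrow> z"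
  proof (rule LIMSEQ_I)
    fix \<epsilon> :: real assume e: "\<epsilon> > 0"
    obtain J where J: "(1/2::real)^J < \<epsilon> / (2 * (2 * K + r))"
      using real_arch_pow_inv[of "\<epsilon> / (2 * (2 * K + r))" "1/2"] e K r by auto
    have J': "(2 * K + r) * (1/2::real)^J < \<epsilon> / 2"
      using J K r by (simp add: field_simps)
    have "(\<lambda>n. s J n) \<longlonglongrightarrow> (\<Sum>j<J. w j)"
      unfolding s_eq c_def by (intro tendsto_sum coef_conv[OF yb wZ])
    then obtain N where N: "\<And>n. n \<ge> N \<Longrightarrow> norm (s J n - (\<Sum>j<J. w j)) < \<epsilon> / 2"
      using LIMSEQ_D[of "\<lambda>n. s J n" _ "\<epsilon>/2"] e by auto
    have RJ: "norm (R J) < r * (1/2)^J" using RP[of J] unfolding P_def by blast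
    show "\<exists>no. \<forall>n\<ge>no. norm (PS y a n - z) < \<epsilon>"
    proof (intro exI allI impI)
      fix n assume n: "n \<ge> N"
      have eq: "PS y a n - z = (PS y a n - s J n) + (s J n - (\<Sum>j<J. w j)) - R J"
        using decomp[of J] by (simp add: algebra_simps)
      have "norm (PS y a n - z) \<le> norm (PS y a n - s J n) + norm (s J n - (\<Sum>j<J. w j)) + norm (R J)"
        unfolding eq by (rule order_trans[OF norm_triangle_ineq4], rule add_right_mono, rule norm_triangle_ineq)
      also have "\<dots> < 2 * K * (1/2)^J + \<epsilon>/2 + r * (1/2)^J"
        using adiff[of n J] N[OF n] RJ by linarith
      also have "\<dots> < \<epsilon>" using J' by (simp add: algebra_simps)
      finally show "norm (PS y a n - z) < \<epsilon>" .
    qed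
  qed
  have "coef y z = a" using coef_unique[OF yb alimz] .
  then show ?thesis using aB by simp
qed



lemma basis_constant:
  fixes y :: "nat \<Rightarrow> 'b::banach"
  assumes yb: "basic_sequence y" and yn: "\<forall>i. norm (y i) = 1"
  shows "\<exists>Kb>0. \<forall>c N n. n \<le> N \<longrightarrow> norm (\<Sum>i<n. c i *\<^sub>R y i) \<le> Kb * norm (\<Sum>i<N. c i *\<^sub>R y i)"
proof -
  obtain K r where K: "K \<ge> 0" and r: "r > 0" and H: "\<forall>z\<in>Zs y. norm z < r \<longrightarrow>
           (\<forall>\<epsilon>>0. \<exists>w\<in>Zs y. (\<forall>n. norm (PS y (coef y w) n) \<le> K) \<and> norm (z - w) < \<epsilon>)"
    using baire_step[OF yb] by blast
  have IB: "norm (PS y (coef y z) n) \<le> 2 * K" if "z \<in> Zs y" "norm z < r" for z n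
    using iterate_bound[OF yb yn K r H that] .
  define Kb where "Kb = 4 * K / r + 1"
  have "0 \<le> 4 * K / r" using K r by simp
  then have Kb: "Kb > 0" unfolding Kb_def by linarith
  show ?thesis
  proof (intro exI[of _ Kb] conjI allI impI Kb)
    fix c :: "nat \<Rightarrow> real" and N n assume nN: "(n::nat) \<le> N"
    define c' where "c' i = (if i < N then c i else 0)" for i
    define z where "z = PS y c N"
    have PSc': "PS y c' m = z" if "m \<ge> N" for m
    proof -
      have "PS y c' m = (\<Sum>i<N. c' i *\<^sub>R y i) + (\<Sum>i\<in>{N..<m}. c' i *\<^sub>R y i)"
        unfolding PS_def using sum_split_ivl[OF that] by blast
      also have "(\<Sum>i\<in>{N..<m}. c' i *\<^sub>R y i) = 0" by (rule sum.neutral) (simp add: c'_def)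
      finally show ?thesis unfolding z_def PS_def c'_def by simp
    qed
    have PSc'n: "PS y c' n = PS y c n" unfolding PS_def c'_def using nN by (intro sum.cong) auto
    have lim: "PS y c' \<longlonglongrightarrow> z"
      by (rule LIMSEQ_offset[where k=N]) (simp add: PSc')
    have zZ: "z \<in> Zs y" using lim_in_Z[OF lim] .
    have cz: "coef y z = c'" using coef_unique[OF yb lim] .
    show "norm (\<Sum>i<n. c i *\<^sub>R y i) \<le> Kb * norm (\<Sum>i<N. c i *\<^sub>R y i)"
    proof (cases "z = 0")
      case True
      have "PS y (\<lambda>i. 0) = (\<lambda>n. 0)" by (rule ext) (simp add: PS_def)
      then have "PS y (\<lambda>i. 0) \<longlonglongrightarrow> z" using True by simp
      then have "coef y z = (\<lambda>i. 0)" using coef_unique[OF yb] by blast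
      then have "c' = (\<lambda>i. 0)" using cz by simp
      then have "PS y c n = 0" using PSc'n by (simp add: PS_def)
      then show ?thesis using Kb by (simp add: PS_def)
    next
      case False
      define t where "t = r / (2 * norm z)"
      have t: "t > 0" unfolding t_def using False r by simp
      have tz: "norm (t *\<^sub>R z) < r" unfolding t_def using False r by simp
      have tzZ: "t *\<^sub>R z \<in> Zs y" using Z_scale(1)[OF yb zZ] .
      have "norm (PS y (coef y (t *\<^sub>R z)) n) \<le> 2 * K" using IB[OF tzZ tz] .
      then have "t * norm (PS y c n) \<le> 2 * K"
        unfolding Z_scale(2)[OF yb zZ] PS_scale cz PSc'n using t by simp
      then have "norm (PS y c n) \<le> 2 * K / t" using t by (simp add: field_simps)
      also have "2 * K / t = (4 * K / r) * norm z" unfolding t_def using r False by (simp add: field_simps)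
      also have "\<dots> \<le> Kb * norm z" unfolding Kb_def by (simp add: distrib_right)
      finally show ?thesis unfolding z_def PS_def .
    qed
  qed
qed



lemma block_bound:
  fixes y :: "nat \<Rightarrow> 'b::real_normed_vector"
  assumes Kb: "\<forall>c N n. n \<le> N \<longrightarrow> norm (\<Sum>i<n. c i *\<^sub>R y i) \<le> Kb * norm (\<Sum>i<N. c i *\<^sub>R y i)"
    and "lo \<le> hi" "hi \<le> N"
  shows "norm (\<Sum>i\<in>{lo..<hi}. c i *\<^sub>R y i) \<le> 2 * Kb * norm (\<Sum>i<N. c i *\<^sub>R y i)"
proof -
  have "(\<Sum>i\<in>{lo..<hi}. c i *\<^sub>R y i) = (\<Sum>i<hi. c i *\<^sub>R y i) - (\<Sum>i<lo. c i *\<^sub>R y i)"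
    using sum_split_ivl[OF assms(2), of "\<lambda>i. c i *\<^sub>R y i"] by simp
  then have "norm (\<Sum>i\<in>{lo..<hi}. c i *\<^sub>R y i) \<le> norm (\<Sum>i<hi. c i *\<^sub>R y i) + norm (\<Sum>i<lo. c i *\<^sub>R y i)"
    by (simp add: norm_triangle_ineq4)
  also have "\<dots> \<le> Kb * norm (\<Sum>i<N. c i *\<^sub>R y i) + Kb * norm (\<Sum>i<N. c i *\<^sub>R y i)"
    using Kb assms(2,3) by (intro add_mono) auto
  finally show ?thesis by simp
qed

lemma sum_blocks:
  fixes y :: "nat \<Rightarrow> 'b::real_normed_vector"
  assumes "finite J" "\<forall>j\<in>J. G j \<subseteq> {..<N}"
  shows "(\<Sum>j\<in>J. b j *\<^sub>R (\<Sum>i\<in>G j. y i)) = (\<Sum>i<N. (\<Sum>j\<in>J. if i \<in> G j then b j else 0) *\<^sub>R y i)"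
proof -
  have "(\<Sum>i<N. (\<Sum>j\<in>J. if i \<in> G j then b j else 0) *\<^sub>R y i)
      = (\<Sum>i<N. \<Sum>j\<in>J. (if i \<in> G j then b j *\<^sub>R y i else 0))"
    by (auto simp: scaleR_sum_left intro!: sum.cong)
  also have "\<dots> = (\<Sum>j\<in>J. \<Sum>i<N. (if i \<in> G j then b j *\<^sub>R y i else 0))" by (rule sum.swap)
  also have "\<dots> = (\<Sum>j\<in>J. \<Sum>i\<in>{..<N} \<inter> G j. b j *\<^sub>R y i)"
    by (rule sum.cong[OF refl]) (simp add: sum.inter_restrict)
  also have "\<dots> = (\<Sum>j\<in>J. b j *\<^sub>R (\<Sum>i\<in>G j. y i))"
  proof (rule sum.cong[OF refl])
    fix j assume "j \<in> J"
    then have "{..<N} \<inter> G j = G j" using assms(2) by blast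
    then show "(\<Sum>i\<in>{..<N} \<inter> G j. b j *\<^sub>R y i) = b j *\<^sub>R (\<Sum>i\<in>G j. y i)"
      by (simp add: scaleR_sum_right)
  qed
  finally show ?thesis by simp
qed

lemma norm_sum_y:
  fixes y :: "nat \<Rightarrow> 'b::real_normed_vector"
  assumes "\<forall>i. norm (y i) = 1"
  shows "norm (\<Sum>i\<in>A. y i) \<le> real (card A)"
proof -
  have "norm (\<Sum>i\<in>A. y i) \<le> (\<Sum>i\<in>A. norm (y i))" by (rule norm_sum)
  also have "\<dots> = real (card A)" using assms by simp
  finally show ?thesis .
qed

lemma sum_geom_le2:
  assumes "finite K0" "inj_on kk K0"
  shows "(\<Sum>j\<in>K0. (1/2::real)^(kk j)) \<le> 2"
proof -
  have "(\<Sum>j\<in>K0. (1/2::real)^(kk j)) = (\<Sum>k\<in>kk ` K0. (1/2)^k)"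
    using sum.reindex[OF assms(2), of "\<lambda>k. (1/2::real)^k"] by simp
  also have "\<dots> \<le> (\<Sum>k<Suc (Max (kk ` K0)). (1/2)^k)"
  proof (cases "K0 = {}")
    case True then show ?thesis by (simp add: sum_nonneg)
  next
    case False
    have "kk ` K0 \<subseteq> {..<Suc (Max (kk ` K0))}"
      using assms(1) by (auto simp: less_Suc_eq_le)
    then show ?thesis by (intro sum_mono2) auto
  qed
  also have "\<dots> \<le> 2" unfolding geom_sum by simp
  finally show ?thesis .
qed

lemma upper_est:
  fixes x :: "nat \<Rightarrow> nat \<Rightarrow> real"
  assumes xS: "\<forall>k. x k \<in> schreier_space" and xn: "\<forall>k. schreier_norm (x k) \<le> B"
    and Nm: "\<forall>k. Nseq k < Nseq (Suc k)"
    and dl: "\<forall>k i. \<bar>x k i\<bar> \<le> dl k" and dlN: "\<forall>k. real (Nseq k) * dl k \<le> (1/2)^k"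
    and tl: "\<forall>k. schreier_norm (tail_seq (Nseq (Suc k)) (x k)) \<le> (1/2)^k"
    and fin: "finite J" and inj: "inj_on kk J" and am: "\<forall>j\<in>J. \<bar>a j\<bar> \<le> m" and m: "m \<ge> 0"
    and B: "B \<ge> 0"
  shows "schreier_norm (\<lambda>i. \<Sum>j\<in>J. a j * x (kk j) i) \<le> m * (B + 2)"
proof (rule norm_le)
  fix F assume F: "schreier_admissible F"
  have mono: "Nseq k1 \<le> Nseq k2" if "k1 \<le> k2" for k1 k2
    using that Nm by (metis lift_Suc_mono_le order.strict_implies_order)
  show "(\<Sum>i\<in>F. \<bar>\<Sum>j\<in>J. a j * x (kk j) i\<bar>) \<le> m * (B + 2)"
  proof (cases "F = {}")
    case True then show ?thesis using m B by simp
  next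
    case False
    define p where "p = Min F"
    have finF: "finite F" using adm_finite[OF F] .
    have pF: "\<forall>i\<in>F. p \<le> i" unfolding p_def using finF by simp
    have cardF: "card F \<le> p + 1" unfolding p_def using adm_card[OF F False] .
    define P where "P k \<longleftrightarrow> Nseq k \<le> p \<and> p < Nseq (Suc k)" for k
    have bk: "(\<Sum>i\<in>F. \<bar>x k i\<bar>) \<le> (1/2)^k + (if P k then B else 0)" for k
    proof (cases "P k")
      case True
      have "(\<Sum>i\<in>F. \<bar>x k i\<bar>) \<le> schreier_norm (x k)" using sum_le_norm[OF S_bdd F] xS by blast
      moreover have "0 \<le> (1/2::real)^k" by simp
      ultimately show ?thesis using True xn[rule_format, of k] by (simp; linarith)
    next
      case nP: False
      show ?thesis
      proof (cases "Nseq (Suc k) \<le> p")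
        case True
        have "\<forall>i\<in>F. Nseq (Suc k) \<le> i" using pF True by (auto intro: order_trans)
        then have "(\<Sum>i\<in>F. \<bar>x k i\<bar>) \<le> schreier_norm (tail_seq (Nseq (Suc k)) (x k))"
          using sum_tail_le[OF S_bdd[OF xS[rule_format]] F] by blast
        then show ?thesis using tl[rule_format, of k] nP by simp
      next
        case False
        then have pl: "p < Nseq k" using nP unfolding P_def by auto
        have "(\<Sum>i\<in>F. \<bar>x k i\<bar>) \<le> real (card F) * dl k"
          using sum_bounded_above[of F "\<lambda>i. \<bar>x k i\<bar>" "dl k"] dl by simp
        also have "\<dots> \<le> real (Nseq k) * dl k"
        proof (rule mult_right_mono)
          show "real (card F) \<le> real (Nseq k)" using cardF pl by simp
          show "0 \<le> dl k" using dl by (meson abs_ge_zero order_trans)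
        qed
        also have "\<dots> \<le> (1/2)^k" using dlN by blast
        finally show ?thesis using nP by simp
      qed
    qed
    have uniq: "k1 = k2" if "P k1" "P k2" for k1 k2
    proof (rule ccontr)
      assume "k1 \<noteq> k2"
      then consider "Suc k1 \<le> k2" | "Suc k2 \<le> k1" by linarith
      then show False
        using that mono unfolding P_def by cases (meson le_less_trans not_le)+
    qed
    have "(\<Sum>i\<in>F. \<bar>\<Sum>j\<in>J. a j * x (kk j) i\<bar>) \<le> (\<Sum>i\<in>F. \<Sum>j\<in>J. m * \<bar>x (kk j) i\<bar>)"
    proof (rule sum_mono)
      fix i assume "i \<in> F"
      have "\<bar>\<Sum>j\<in>J. a j * x (kk j) i\<bar> \<le> (\<Sum>j\<in>J. \<bar>a j * x (kk j) i\<bar>)" by (rule sum_abs)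
      also have "\<dots> \<le> (\<Sum>j\<in>J. m * \<bar>x (kk j) i\<bar>)"
        by (rule sum_mono) (use am in \<open>auto simp: abs_mult intro: mult_right_mono\<close>)
      finally show "\<bar>\<Sum>j\<in>J. a j * x (kk j) i\<bar> \<le> (\<Sum>j\<in>J. m * \<bar>x (kk j) i\<bar>)" .
    qed
    also have "\<dots> = m * (\<Sum>j\<in>J. \<Sum>i\<in>F. \<bar>x (kk j) i\<bar>)"
      by (simp add: sum_distrib_left sum.swap[of _ F J])
    also have "\<dots> \<le> m * (\<Sum>j\<in>J. (1/2)^(kk j) + (if P (kk j) then B else 0))"
      by (intro mult_left_mono sum_mono bk m)
    also have "\<dots> \<le> m * (B + 2)"
    proof (rule mult_left_mono[OF _ m])
      have s1: "(\<Sum>j\<in>J. (1/2::real)^(kk j)) \<le> 2" using sum_geom_le2[OF fin inj] .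
      have "(\<Sum>j\<in>J. (if P (kk j) then B else 0)) = (\<Sum>j\<in>{j\<in>J. P (kk j)}. B)"
        using sum.inter_filter[OF fin, of "\<lambda>j. B" "\<lambda>j. P (kk j)"] by simp
      also have "\<dots> = real (card {j\<in>J. P (kk j)}) * B" by simp
      also have "\<dots> \<le> 1 * B"
      proof (rule mult_right_mono[OF _ B])
        have "card {j\<in>J. P (kk j)} \<le> Suc 0"
          using fin uniq inj unfolding card_le_Suc0_iff_eq[OF finite_subset[OF _ fin], of "{j\<in>J. P (kk j)}", simplified]
          by (auto simp: inj_on_def)
        then show "real (card {j\<in>J. P (kk j)}) \<le> 1" by simp
      qed
      finally have s2: "(\<Sum>j\<in>J. (if P (kk j) then B else 0)) \<le> B" by simp
      show "(\<Sum>j\<in>J. (1/2)^(kk j) + (if P (kk j) then B else 0)) \<le> B + 2"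
        using s1 s2 by (simp add: sum.distrib)
    qed
    finally show ?thesis .
  qed
qed



theorem lemma2p2:
  fixes T :: "(nat \<Rightarrow> real) \<Rightarrow> 'b::banach"
    and C :: real
    and y :: "nat \<Rightarrow> 'b"
  assumes T_bl: "schreier_bounded_linear T"
    and T_onto: "T ` schreier_space = UNIV"
    and C_pos: "C > 0"
    and C_ball: "\<forall>v::'b. norm v \<le> 1 \<longrightarrow>
                   (\<exists>x\<in>schreier_space. schreier_norm x \<le> C \<and> T x = v)"
    and y_norm: "\<forall>i. norm (y i) = 1"
    and y_weak: "weakly_null y"
    and y_basic: "basic_sequence y"
    and no_c0: "\<not> (\<exists>u. block_basis_of_1_averages y u \<and> equiv_c0_basis u)"
  shows "\<exists>\<delta>>0. \<forall>x\<in>schreier_space.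
           schreier_norm x \<le> 3 * C \<and> one_average y (T x) \<and> norm (T x) > 1/3
           \<longrightarrow> sup_norm x > \<delta>"
proof (rule ccontr)
  assume neg: "\<not> ?thesis"
  define B where "B = 3 * C"
  have B: "B \<ge> 0" unfolding B_def using C_pos by simp
  have ex: "\<exists>x. x \<in> schreier_space \<and> schreier_norm x \<le> B \<and> one_average y (T x) \<and> norm (T x) > 1/3 \<and> sup_norm x \<le> \<delta>"
    if "\<delta> > 0" for \<delta>
  proof -
    have "\<exists>x\<in>schreier_space. schreier_norm x \<le> 3 * C \<and> one_average y (T x) \<and> norm (T x) > 1/3 \<and> \<not> sup_norm x > \<delta>"
      using neg that by blast
    then show ?thesis unfolding B_def by (auto simp: not_less)
  qed
  obtain Kb where Kb: "Kb > 0" "\<forall>c N n. n \<le> N \<longrightarrow> norm (\<Sum>i<n. c i *\<^sub>R y i) \<le> Kb * norm (\<Sum>i<N. c i *\<^sub>R y i)"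
    using basis_constant[OF y_basic y_norm] by blast
  obtain KT where KT: "KT \<ge> 0" "\<And>x. x \<in> schreier_space \<Longrightarrow> norm (T x) \<le> KT * schreier_norm x"
    using T_bound[OF T_bl] by blast
  define Xf where "Xf \<delta> = (SOME x. x \<in> schreier_space \<and> schreier_norm x \<le> B \<and> one_average y (T x) \<and> norm (T x) > 1/3 \<and> sup_norm x \<le> \<delta>)" for \<delta> :: real
  have Xf: "Xf \<delta> \<in> schreier_space \<and> schreier_norm (Xf \<delta>) \<le> B \<and> one_average y (T (Xf \<delta>)) \<and> norm (T (Xf \<delta>)) > 1/3 \<and> sup_norm (Xf \<delta>) \<le> \<delta>"
    if "\<delta> > 0" for \<delta>
    unfolding Xf_def by (rule someI_ex[OF ex[OF that]])
  have tailex: "\<exists>N. N \<ge> n0 \<and> schreier_norm (tail_seq N x) < \<epsilon>"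
    if xs0: "x \<in> schreier_space" and e0: "\<epsilon> > 0" for x \<epsilon> n0
  proof -
    obtain no where no: "\<forall>n\<ge>no. norm (schreier_norm (tail_seq n x) - 0) < \<epsilon>"
      using LIMSEQ_D[OF S_tail[OF xs0] e0] by blast
    have "\<bar>schreier_norm (tail_seq (max no n0) x)\<bar> < \<epsilon>" using no by simp
    then show ?thesis by (intro exI[of _ "max no n0"]) auto
  qed
  define Nf where "Nf x \<epsilon> n0 = (SOME N. N \<ge> n0 \<and> schreier_norm (tail_seq N x) < \<epsilon>)" for x \<epsilon> n0
  have Nf: "Nf x \<epsilon> n0 \<ge> n0 \<and> schreier_norm (tail_seq (Nf x \<epsilon> n0) x) < \<epsilon>"
    if "x \<in> schreier_space" "\<epsilon> > 0" for x \<epsilon> n0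
    unfolding Nf_def by (rule someI_ex[OF tailex[OF that]])
  define Nseq where "Nseq = rec_nat 0 (\<lambda>k m. Nf (Xf ((1/2::real)^k / (real m + 1))) ((1/2::real)^k) (m + 1))"
  define dl where "dl k = (1/2::real)^k / (real (Nseq k) + 1)" for k
  define x where "x k = Xf (dl k)" for k
  have NS: "Nseq (Suc k) = Nf (x k) ((1/2)^k) (Nseq k + 1)" for k
    unfolding Nseq_def x_def dl_def by simp
  have dlpos: "dl k > 0" for k unfolding dl_def by simp
  have xP: "x k \<in> schreier_space \<and> schreier_norm (x k) \<le> B \<and> one_average y (T (x k)) \<and> norm (T (x k)) > 1/3 \<and> sup_norm (x k) \<le> dl k" for k
    unfolding x_def using Xf[OF dlpos] .
  have xS: "\<forall>k. x k \<in> schreier_space" using xP by blast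
  have xn: "\<forall>k. schreier_norm (x k) \<le> B" using xP by blast
  have NP: "Nseq (Suc k) \<ge> Nseq k + 1 \<and> schreier_norm (tail_seq (Nseq (Suc k)) (x k)) < (1/2)^k" for k
    unfolding NS using Nf[OF xS[rule_format] zero_less_power[of "1/2::real" k]] by simp
  have Nm: "\<forall>k. Nseq k < Nseq (Suc k)" using NP by (simp add: Suc_le_eq)
  have dlx: "\<forall>k i. \<bar>x k i\<bar> \<le> dl k" using xP sup_norm_coord[OF xS[rule_format]] by (meson order_trans)
  have dlN: "\<forall>k. real (Nseq k) * dl k \<le> (1/2)^k"
  proof
    fix k
    have "real (Nseq k) * dl k = (1/2)^k * (real (Nseq k) / (real (Nseq k) + 1))"
      unfolding dl_def by simp
    also have "\<dots> \<le> (1/2)^k * 1" by (intro mult_left_mono) auto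
    finally show "real (Nseq k) * dl k \<le> (1/2)^k" by simp
  qed
  have tl: "\<forall>k. schreier_norm (tail_seq (Nseq (Suc k)) (x k)) \<le> (1/2)^k"
    using NP by (simp add: less_imp_le)
  have UE: "norm (\<Sum>j\<in>J. a j *\<^sub>R T (x (kk j))) \<le> KT * (m * (B + 2))"
    if fin: "finite J" and inj: "inj_on kk J" and am: "\<forall>j\<in>J. \<bar>a j\<bar> \<le> m" and m: "m \<ge> 0" for J kk a m
  proof -
    have mem: "(\<lambda>i. \<Sum>j\<in>J. a j * x (kk j) i) \<in> schreier_space"
      by (rule S_sum[OF fin]) (use xS in auto)
    have "(\<Sum>j\<in>J. a j *\<^sub>R T (x (kk j))) = T (\<lambda>i. \<Sum>j\<in>J. a j * x (kk j) i)"
      using T_sum[OF T_bl fin, of "\<lambda>j. x (kk j)" a] xS by simp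
    then have "norm (\<Sum>j\<in>J. a j *\<^sub>R T (x (kk j))) \<le> KT * schreier_norm (\<lambda>i. \<Sum>j\<in>J. a j * x (kk j) i)"
      using KT(2)[OF mem] by simp
    also have "\<dots> \<le> KT * (m * (B + 2))"
      by (intro mult_left_mono KT(1) upper_est[OF xS xn Nm dlx dlN tl fin inj am m B])
    finally show ?thesis .
  qed

  have "\<forall>k. \<exists>l F. l > 0 \<and> finite F \<and> F \<noteq> {} \<and> T (x k) = l *\<^sub>R (\<Sum>n\<in>F. y n)"
    using xP unfolding one_average_def by blast
  then obtain lam Fs where LF: "\<And>k. lam k > 0 \<and> finite (Fs k) \<and> Fs k \<noteq> {} \<and> T (x k) = lam k *\<^sub>R (\<Sum>n\<in>Fs k. y n)"
    by metis
  define D where "D = 2 * Kb * (KT * (B + 2))"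
  have CB: "(\<Sum>k\<in>K0. if i \<in> Fs k then lam k else 0) \<le> D" if finK: "finite K0" for K0 i
  proof -
    define U where "U = insert i (\<Union>k\<in>K0. Fs k)"
    have finU: "finite U" unfolding U_def using finK LF by auto
    define N where "N = Suc (Max U)"
    have sub: "\<forall>k\<in>K0. Fs k \<subseteq> {..<N}"
    proof (intro ballI subsetI)
      fix k n assume "k \<in> K0" "n \<in> Fs k"
      then have "n \<in> U" unfolding U_def by blast
      then have "n \<le> Max U" using Max_ge[OF finU] by blast
      then show "n \<in> {..<N}" unfolding N_def by simp
    qed
    have "i \<le> Max U" using Max_ge[OF finU] unfolding U_def by blast
    then have iN: "i < N" unfolding N_def by simp
    define c where "c n = (\<Sum>k\<in>K0. if n \<in> Fs k then lam k else 0)" for n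
    have "(\<Sum>k\<in>K0. T (x k)) = (\<Sum>k\<in>K0. lam k *\<^sub>R (\<Sum>n\<in>Fs k. y n))"
      using LF by simp
    also have "\<dots> = (\<Sum>n<N. c n *\<^sub>R y n)"
      unfolding c_def by (rule sum_blocks[OF finK sub])
    finally have zeq: "(\<Sum>k\<in>K0. T (x k)) = (\<Sum>n<N. c n *\<^sub>R y n)" .
    have "norm (\<Sum>k\<in>K0. 1 *\<^sub>R T (x (id k))) \<le> KT * (1 * (B + 2))"
      by (rule UE[OF finK]) auto
    then have zb: "norm (\<Sum>n<N. c n *\<^sub>R y n) \<le> KT * (B + 2)" using zeq by simp
    have "\<bar>c i\<bar> = norm (\<Sum>n\<in>{i..<Suc i}. c n *\<^sub>R y n)" using y_norm by simp
    also have "\<dots> \<le> 2 * Kb * norm (\<Sum>n<N. c n *\<^sub>R y n)"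
      by (rule block_bound[OF Kb(2)]) (use iN in auto)
    also have "\<dots> \<le> D" unfolding D_def using zb Kb(1) by (intro mult_left_mono) auto
    finally show ?thesis unfolding c_def by simp
  qed
  define g where "g M k = (\<Sum>i<M. if i \<in> Fs k then lam k else 0)" for M k
  have gsmall: "\<exists>k\<ge>k0. g M k < \<epsilon>" if e: "\<epsilon> > 0" for M k0 \<epsilon>
  proof (rule ccontr)
    assume "\<not> ?thesis"
    then have ge: "\<forall>k\<ge>k0. g M k \<ge> \<epsilon>" by (auto simp: not_less)
    obtain L :: nat where L: "real M * D < real L * \<epsilon>" using ex_less_of_nat_mult[OF e] by blast
    have "real L * \<epsilon> \<le> (\<Sum>k\<in>{k0..<k0+L}. g M k)"
      using sum_bounded_below[of "{k0..<k0+L}" \<epsilon> "g M"] ge by simp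
    also have "\<dots> = (\<Sum>i<M. \<Sum>k\<in>{k0..<k0+L}. if i \<in> Fs k then lam k else 0)"
      unfolding g_def by (rule sum.swap)
    also have "\<dots> \<le> (\<Sum>i<M. D)" by (rule sum_mono) (rule CB, simp)
    also have "\<dots> = real M * D" by simp
    finally show False using L by simp
  qed
  have trim: "norm (T (x k) - lam k *\<^sub>R (\<Sum>n\<in>{n\<in>Fs k. M \<le> n}. y n)) \<le> g M k" for M k
  proof -
    have fin: "finite (Fs k)" using LF by blast
    have "(\<Sum>n\<in>Fs k. y n) = (\<Sum>n\<in>{n\<in>Fs k. n < M} \<union> {n\<in>Fs k. M \<le> n}. y n)"
      by (rule sum.cong) auto
    also have "\<dots> = (\<Sum>n\<in>{n\<in>Fs k. n < M}. y n) + (\<Sum>n\<in>{n\<in>Fs k. M \<le> n}. y n)"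
      by (rule sum.union_disjoint) (use fin in auto)
    finally have "T (x k) - lam k *\<^sub>R (\<Sum>n\<in>{n\<in>Fs k. M \<le> n}. y n) = lam k *\<^sub>R (\<Sum>n\<in>{n\<in>Fs k. n < M}. y n)"
      using LF[of k] by (simp add: algebra_simps)
    then have "norm (T (x k) - lam k *\<^sub>R (\<Sum>n\<in>{n\<in>Fs k. M \<le> n}. y n)) = lam k * norm (\<Sum>n\<in>{n\<in>Fs k. n < M}. y n)"
      using LF[of k] by simp
    also have "\<dots> \<le> lam k * real (card {n\<in>Fs k. n < M})"
      using LF[of k] norm_sum_y[OF y_norm] by (intro mult_left_mono) auto
    also have "\<dots> = g M k"
    proof -
      have "g M k = (\<Sum>i\<in>{..<M} \<inter> Fs k. lam k)" unfolding g_def using sum.inter_restrict[of "{..<M}" "\<lambda>_. lam k" "Fs k"] by simp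
      also have "{..<M} \<inter> Fs k = {n\<in>Fs k. n < M}" by auto
      finally show ?thesis by simp
    qed
    finally show ?thesis .
  qed

  define kf where "kf M k0 j = (SOME k. k \<ge> k0 \<and> g M k < (1/12) * (1/2::real)^j)" for M k0 j
  have kf: "kf M k0 j \<ge> k0 \<and> g M (kf M k0 j) < (1/12) * (1/2::real)^j" for M k0 j
  proof -
    have "\<exists>k\<ge>k0. g M k < (1/12) * (1/2::real)^j" by (rule gsmall) simp
    then have "\<exists>k. k \<ge> k0 \<and> g M k < (1/12) * (1/2::real)^j" by blast
    then show ?thesis unfolding kf_def by (rule someI_ex)
  qed
  define PQ where "PQ = rec_nat (kf 0 0 0, 0) (\<lambda>j p. (kf (Max (Fs (fst p)) + 1) (fst p + 1) (Suc j), Max (Fs (fst p)) + 1))"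
  define kk where "kk j = fst (PQ j)" for j
  define MM where "MM j = snd (PQ j)" for j
  have kk0: "kk 0 = kf 0 0 0" and MM0: "MM 0 = 0" unfolding kk_def MM_def PQ_def by simp_all
  have MMS: "MM (Suc j) = Max (Fs (kk j)) + 1" for j unfolding kk_def MM_def PQ_def by simp
  have kkS: "kk (Suc j) = kf (MM (Suc j)) (kk j + 1) (Suc j)" for j
    unfolding kk_def MM_def PQ_def by simp
  have gk: "g (MM j) (kk j) < (1/12) * (1/2::real)^j" for j
  proof (cases j)
    case 0 then show ?thesis using kf[of 0 0 0] by (simp add: kk0 MM0)
  next
    case (Suc j') then show ?thesis using kf[of "kk j' + 1" "MM (Suc j')" "Suc j'"] by (simp add: kkS)
  qed
  have kkm: "kk j < kk (Suc j)" for j using kf[of "kk j + 1" "MM (Suc j)" "Suc j"] by (simp add: kkS)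
  have smk: "strict_mono kk" using kkm by (rule strict_monoI_Suc)
  define G where "G j = {n \<in> Fs (kk j). MM j \<le> n}" for j
  define u where "u j = lam (kk j) *\<^sub>R (\<Sum>n\<in>G j. y n)" for j
  have ue: "norm (T (x (kk j)) - u j) \<le> 1/12" for j
  proof -
    have "norm (T (x (kk j)) - u j) \<le> g (MM j) (kk j)" unfolding u_def G_def by (rule trim)
    also have "\<dots> \<le> (1/12) * (1/2::real)^j" using gk[of j] by simp
    also have "\<dots> \<le> 1/12" by (simp add: power_le_one)
    finally show ?thesis .
  qed
  have ue2: "norm (T (x (kk j)) - u j) \<le> (1/12) * (1/2::real)^j" for j
    using trim[of "kk j" "MM j"] gk[of j] unfolding u_def G_def by simp
  have unorm: "norm (u j) > 1/4" for j
  proof -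
    have "norm (T (x (kk j))) \<le> norm (T (x (kk j)) - u j) + norm (u j)"
      using norm_triangle_ineq[of "T (x (kk j)) - u j" "u j"] by simp
    then show ?thesis using ue[of j] xP[of "kk j"] by linarith
  qed
  have Gne: "G j \<noteq> {}" for j
  proof
    assume "G j = {}"
    then have "u j = 0" unfolding u_def by simp
    then show False using unorm[of j] by simp
  qed
  have Gfin: "finite (G j)" for j unfolding G_def using LF by simp
  have Gint: "G j \<subseteq> {MM j..<MM (Suc j)}" for j
  proof
    fix n assume n: "n \<in> G j"
    then have "n \<le> Max (Fs (kk j))" using LF unfolding G_def by simp
    then show "n \<in> {MM j..<MM (Suc j)}" using n unfolding G_def MMS by auto
  qed
  have MMm: "MM j < MM (Suc j)" for j
  proof -
    obtain n where "n \<in> G j" using Gne by blast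
    then show ?thesis using Gint by fastforce
  qed
  have smM: "strict_mono MM" using MMm by (rule strict_monoI_Suc)
  have monoM: "MM a \<le> MM b" if "a \<le> b" for a b using smM that by (simp add: strict_mono_less_eq)
  have bb: "block_basis_of_1_averages y u"
    unfolding block_basis_of_1_averages_def
  proof (rule exI[of _ "\<lambda>j. lam (kk j)"], rule exI[of _ G], intro conjI allI)
    fix k
    show "0 < lam (kk k)" using LF by blast
    show "finite (G k)" by (rule Gfin)
    show "G k \<noteq> {}" by (rule Gne)
    show "u k = lam (kk k) *\<^sub>R (\<Sum>n\<in>G k. y n)" unfolding u_def ..
    have "Max (G k) \<in> G k" using Gfin Gne by simp
    then have "Max (G k) < MM (Suc k)" using Gint by fastforce
    moreover have "Min (G (Suc k)) \<in> G (Suc k)" using Gfin Gne by simp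
    then have "MM (Suc k) \<le> Min (G (Suc k))" using Gint by fastforce
    ultimately show "Max (G k) < Min (G (Suc k))" by linarith
  qed
  have ec: "equiv_c0_basis u"
    unfolding equiv_c0_basis_def
  proof (rule exI[of _ "1 / (8 * Kb)"], rule exI[of _ "KT * (B + 2) + 1"], intro conjI allI)
    show "0 < 1 / (8 * Kb)" using Kb(1) by simp
    show "0 < KT * (B + 2) + 1" using mult_nonneg_nonneg[OF KT(1), of "B + 2"] B by linarith
    fix n and a :: "nat \<Rightarrow> real"
    define m where "m = (MAX k\<in>{..n}. \<bar>a k\<bar>)"
    have am: "\<forall>j\<in>{..n}. \<bar>a j\<bar> \<le> m" unfolding m_def by simp
    have m0: "m \<ge> 0" using am[rule_format, of 0] by simp
    define v where "v = (\<Sum>k\<le>n. a k *\<^sub>R u k)"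
    show "1 / (8 * Kb) * (MAX k\<in>{..n}. \<bar>a k\<bar>) \<le> norm (\<Sum>k\<le>n. a k *\<^sub>R u k)"
    proof -
      define N where "N = MM (Suc n)"
      have sub: "\<forall>j\<in>{..n}. G j \<subseteq> {..<N}"
      proof (intro ballI subsetI)
        fix j i assume j: "j \<in> {..n}" and i: "i \<in> G j"
        have "i < MM (Suc j)" using Gint[of j] i by auto
        also have "MM (Suc j) \<le> MM (Suc n)" using j monoM by simp
        finally show "i \<in> {..<N}" unfolding N_def by simp
      qed
      define c where "c i = (\<Sum>j\<le>n. if i \<in> G j then a j * lam (kk j) else 0)" for i
      have "v = (\<Sum>j\<le>n. (a j * lam (kk j)) *\<^sub>R (\<Sum>i\<in>G j. y i))"
        unfolding v_def u_def by simp
      also have "\<dots> = (\<Sum>i<N. c i *\<^sub>R y i)"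
        unfolding c_def by (rule sum_blocks[OF _ sub]) simp
      finally have veq: "v = (\<Sum>i<N. c i *\<^sub>R y i)" .
      have each: "\<bar>a j0\<bar> \<le> 8 * Kb * norm v" if j0: "j0 \<le> n" for j0
      proof -
        have cI: "c i = (if i \<in> G j0 then a j0 * lam (kk j0) else 0)" if iI: "i \<in> {MM j0..<MM (Suc j0)}" for i
        proof -
          have nG: "i \<notin> G j" if "j \<in> {..n}" "j \<noteq> j0" for j
          proof
            assume "i \<in> G j"
            then have ij: "MM j \<le> i" "i < MM (Suc j)" using Gint[of j] by auto
            show False
            proof (cases "j < j0")
              case True
              then have "MM (Suc j) \<le> MM j0" using monoM by simp
              then show False using ij iI by simp
            next
              case False
              then have "Suc j0 \<le> j" using \<open>j \<noteq> j0\<close> by simp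
              then have "MM (Suc j0) \<le> MM j" using monoM by simp
              then show False using ij iI by simp
            qed
          qed
          have "c i = (if i \<in> G j0 then a j0 * lam (kk j0) else 0)
                     + (\<Sum>j\<in>{..n} - {j0}. if i \<in> G j then a j * lam (kk j) else 0)"
            unfolding c_def using j0 by (subst sum.remove[of _ j0]) auto
          also have "(\<Sum>j\<in>{..n} - {j0}. if i \<in> G j then a j * lam (kk j) else 0) = 0"
            by (rule sum.neutral) (use nG in auto)
          finally show ?thesis by simp
        qed
        have GI: "G j0 \<subseteq> {MM j0..<MM (Suc j0)}" by (rule Gint)
        have "(\<Sum>i\<in>{MM j0..<MM (Suc j0)}. c i *\<^sub>R y i)
              = (\<Sum>i\<in>{MM j0..<MM (Suc j0)}. if i \<in> G j0 then (a j0 * lam (kk j0)) *\<^sub>R y i else 0)"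
          by (rule sum.cong[OF refl]) (simp add: cI)
        also have "\<dots> = (\<Sum>i\<in>{MM j0..<MM (Suc j0)} \<inter> G j0. (a j0 * lam (kk j0)) *\<^sub>R y i)"
          by (simp add: sum.inter_restrict)
        also have "{MM j0..<MM (Suc j0)} \<inter> G j0 = G j0" using GI by blast
        also have "(\<Sum>i\<in>G j0. (a j0 * lam (kk j0)) *\<^sub>R y i) = a j0 *\<^sub>R u j0"
          unfolding u_def by (simp add: scaleR_sum_right)
        finally have blk: "(\<Sum>i\<in>{MM j0..<MM (Suc j0)}. c i *\<^sub>R y i) = a j0 *\<^sub>R u j0" .
        have "norm (a j0 *\<^sub>R u j0) \<le> 2 * Kb * norm (\<Sum>i<N. c i *\<^sub>R y i)"
          unfolding blk[symmetric]
          by (rule block_bound[OF Kb(2)]) (use j0 monoM in \<open>auto simp: N_def\<close>)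
        then have "\<bar>a j0\<bar> * norm (u j0) \<le> 2 * Kb * norm v" unfolding veq by simp
        moreover have "\<bar>a j0\<bar> * (1/4) \<le> \<bar>a j0\<bar> * norm (u j0)"
          using unorm[of j0] by (intro mult_left_mono) auto
        ultimately show ?thesis by linarith
      qed
      have "m \<le> 8 * Kb * norm v" unfolding m_def
        using each by (subst Max_le_iff) auto
      then have "(1 / (8 * Kb)) * m \<le> norm v" using Kb(1) by (simp add: field_simps)
      then show ?thesis unfolding v_def m_def .
    qed
    show "norm (\<Sum>k\<le>n. a k *\<^sub>R u k) \<le> (KT * (B + 2) + 1) * (MAX k\<in>{..n}. \<bar>a k\<bar>)"
    proof -
      have "v = (\<Sum>k\<le>n. a k *\<^sub>R T (x (kk k))) - (\<Sum>k\<le>n. a k *\<^sub>R (T (x (kk k)) - u k))"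
        unfolding v_def by (simp add: sum_subtractf[symmetric] algebra_simps)
      then have "norm v \<le> norm (\<Sum>k\<le>n. a k *\<^sub>R T (x (kk k))) + norm (\<Sum>k\<le>n. a k *\<^sub>R (T (x (kk k)) - u k))"
        by (simp add: norm_triangle_ineq4)
      also have "\<dots> \<le> KT * (m * (B + 2)) + m * (1/6)"
      proof (rule add_mono)
        show "norm (\<Sum>k\<le>n. a k *\<^sub>R T (x (kk k))) \<le> KT * (m * (B + 2))"
          by (rule UE[OF _ _ am m0]) (use smk strict_mono_imp_inj_on in auto)
        have "norm (\<Sum>k\<le>n. a k *\<^sub>R (T (x (kk k)) - u k)) \<le> (\<Sum>k\<le>n. norm (a k *\<^sub>R (T (x (kk k)) - u k)))"
          by (rule norm_sum)
        also have "\<dots> \<le> (\<Sum>k\<le>n. m * ((1/12) * (1/2::real)^k))"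
        proof (rule sum_mono)
          fix k assume k: "k \<in> {..n}"
          have "norm (a k *\<^sub>R (T (x (kk k)) - u k)) = \<bar>a k\<bar> * norm (T (x (kk k)) - u k)" by simp
          also have "\<dots> \<le> m * ((1/12) * (1/2::real)^k)"
            using am k ue2[of k] by (intro mult_mono) auto
          finally show "norm (a k *\<^sub>R (T (x (kk k)) - u k)) \<le> m * ((1/12) * (1/2::real)^k)" .
        qed
        also have "\<dots> = m * (1/12) * (\<Sum>k\<le>n. (1/2::real)^k)" by (simp add: sum_distrib_left mult.assoc)
        also have "\<dots> \<le> m * (1/12) * 2"
          using sum_geom_le2[of "{..n}" id] m0 by (intro mult_left_mono) auto
        finally show "norm (\<Sum>k\<le>n. a k *\<^sub>R (T (x (kk k)) - u k)) \<le> m * (1/6)" by simp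
      qed
      also have "\<dots> \<le> (KT * (B + 2) + 1) * m" using m0 by (simp add: algebra_simps)
      finally show ?thesis unfolding v_def m_def .
    qed
  qed
  show False using no_c0 bb ec by blast
qed


end
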